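(* Let $q$ be a prime power, $m,s\ge1$, $n=n_1+\dots+n_\ell$ with all $n_i>0$, and let $\mathcal{C}\subseteq\mathbb{F}_{q^m}^n$ be an $\mathbb{F}_{q^m}$-linear code of dimension $k$ and minimum sum-rank distance $d$ (w.r.t. the partition $(n_1,\dots,n_\ell)$), with parity-check matrix $\mathbf{H}=(\mathbf{H}^{(1)}\mid\dots\mid\mathbf{H}^{(\ell)})\in\mathbb{F}_{q^m}^{(n-k)\times n}$, $\mathbf{H}^{(i)}\in\mathbb{F}_{q^m}^{(n-k)\times n_i}$. Let $\mathbf{E}=(\mathbf{E}^{(1)}\mid\dots\mid\mathbf{E}^{(\ell)})\in\mathbb{F}_{q^m}^{s\times n}$ with $\mathbf{E}^{(i)}\in\mathbb{F}_{q^m}^{s\times n_i}$, $\operatorname{rk}_q(\mathbf{E}^{(i)})=t_i$, and sum-rank weight $t=\sum_it_i\le d-2$. Let $\mathbf{S}=\mathbf{H}\mathbf{E}^\top$, let $\mathbf{P}\in\mathbb{F}_{q^m}^{(n-k)\times(n-k)}$ be invertible with $\mathbf{P}\mathbf{S}$ in row-echelon form, and let $\mathbf{H}_{\mathrm{sub}}=(\mathbf{H}_{\mathrm{sub}}^{(1)}\mid\dots\mid\mathbf{H}_{\mathrm{sub}}^{(\ell)})$ be the submatrix of $\mathbf{P}\mathbf{H}$ formed by the rows corresponding to the zero rows of $\mathbf{P}\mathbf{S}$ (with $\mathbf{H}_{\mathrm{sub}}^{(i)}$ having $n_i$ columns). If $s\ge t$ and $\operatorname{rk}_{q^m}(\mathbf{E})=t$,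 then for all $i\in[1:\ell]$, $$\mathcal{R}_q(\mathbf{E}^{(i)})=\ker_r\big(\operatorname{ext}(\mathbf{H}_{\mathrm{sub}}^{(i)})\big)_q .$$
   Context: Fix an ordered basis $\mathbf{b}$ of $\mathbb{F}_{q^m}$ over $\mathbb{F}_q$; $\operatorname{ext}(\alpha)\in\mathbb{F}_q^m$ is the coordinate column vector of $\alpha\in\mathbb{F}_{q^m}$ w.r.t. $\mathbf{b}$, applied entrywise to matrices (an $a\times b$ matrix over $\mathbb{F}_{q^m}$ becomes an $am\times b$ matrix over $\mathbb{F}_q$). $\operatorname{rk}_q(\mathbf{X}):=\operatorname{rk}(\operatorname{ext}(\mathbf{X}))$ over $\mathbb{F}_q$; $\operatorname{rk}_{q^m}$ is the rank over $\mathbb{F}_{q^m}$. The sum-rank weight of $\mathbf{x}=(\mathbf{x}^{(1)}\mid\dots\mid\mathbf{x}^{(\ell)})$ is $\sum_i\operatorname{rk}_q(\mathbf{x}^{(i)})$, the sum-rank distance is the weight of the difference, and $d$ is the minimum sum-rank distance between distinct codewords. $\mathcal{R}_q(\mathbf{X})$ denotes the $\mathbb{F}_q$-row space of $\operatorname{ext}(\mathbf{X})$. For a matrix $\mathbf{M}$ over $\mathbb{F}_q$ with $N$ columns, $\ker_r(\mathbf{M})_q=\{\mathbf{v}\in\mathbb{F}_q^N:\mathbf{M}\mathbf{v}^\top=\mathbf{0}\}$. *)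

theory Defs
  imports "Jordan_Normal_Form.DL_Rank" "Jordan_Normal_Form.Matrix_Kernel"
    "HOL-Library.Extended_Nat"
begin

(* F_q is the finite field type 'q, F_{q^m} is the finite field type 'Q.
   phi :: 'q => 'Q is a field embedding (ring homomorphism),
   b :: 'Q vec (of dimension m) is an ordered basis of 'Q over phi('q). *)

definition is_embedding :: "('q::field \<Rightarrow> 'Q::field) \<Rightarrow> bool" where
  "is_embedding phi \<longleftrightarrow> phi 1 = 1 \<and> (\<forall>a c. phi (a + c) = phi a + phi c)
      \<and> (\<forall>a c. phi (a * c) = phi a * phi c)"

definition lin_comb :: "('q::field \<Rightarrow> 'Q::field) \<Rightarrow> 'Q vec \<Rightarrow> 'q vec \<Rightarrow> 'Q" where
  "lin_comb phi b c = (\<Sum>j<dim_vec b. phi (c $ j) * b $ j)"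

definition is_basis :: "('q::field \<Rightarrow> 'Q::field) \<Rightarrow> 'Q vec \<Rightarrow> bool" where
  "is_basis phi b \<longleftrightarrow>
     (\<forall>\<alpha>. \<exists>!c. c \<in> carrier_vec (dim_vec b) \<and> lin_comb phi b c = \<alpha>)"

definition ext_el :: "('q::field \<Rightarrow> 'Q::field) \<Rightarrow> 'Q vec \<Rightarrow> 'Q \<Rightarrow> 'q vec" where
  "ext_el phi b \<alpha> = (THE c. c \<in> carrier_vec (dim_vec b) \<and> lin_comb phi b c = \<alpha>)"

(* entrywise extension: an a x c matrix over F_{q^m} becomes an (a*m) x c matrix over F_q;
   entry (i,j) becomes the column ext(X_{ij}) occupying rows i*m .. i*m+m-1 *)
definition ext_mat :: "('q::field \<Rightarrow> 'Q::field) \<Rightarrow> 'Q vec \<Rightarrow> 'Q mat \<Rightarrow> 'q mat" where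
  "ext_mat phi b X = mat (dim_row X * dim_vec b) (dim_col X)
     (\<lambda>(r, j). ext_el phi b (X $$ (r div dim_vec b, j)) $ (r mod dim_vec b))"

definition rk_q :: "('q::field \<Rightarrow> 'Q::field) \<Rightarrow> 'Q vec \<Rightarrow> 'Q mat \<Rightarrow> nat" where
  "rk_q phi b X = vec_space.rank (dim_row (ext_mat phi b X)) (ext_mat phi b X)"

definition rk :: "'a::field mat \<Rightarrow> nat" where
  "rk X = vec_space.rank (dim_row X) X"

definition row_space_q :: "('q::field \<Rightarrow> 'Q::field) \<Rightarrow> 'Q vec \<Rightarrow> 'Q mat \<Rightarrow> 'q vec set" where
  "row_space_q phi b X = vec_space.row_space (dim_col X) (ext_mat phi b X)"

(* column offset of block i for the partition ns = [n_1,...,n_l] (blocks indexed from 0) *)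
definition blk_off :: "nat list \<Rightarrow> nat \<Rightarrow> nat" where
  "blk_off ns i = sum_list (take i ns)"

definition blk :: "nat list \<Rightarrow> 'a mat \<Rightarrow> nat \<Rightarrow> 'a mat" where
  "blk ns X i = mat (dim_row X) (ns ! i) (\<lambda>(r, j). X $$ (r, blk_off ns i + j))"

definition sr_weight :: "('q::field \<Rightarrow> 'Q::field) \<Rightarrow> 'Q vec \<Rightarrow> nat list \<Rightarrow> 'Q mat \<Rightarrow> nat" where
  "sr_weight phi b ns X = (\<Sum>i<length ns. rk_q phi b (blk ns X i))"

definition sr_dist :: "('q::field \<Rightarrow> 'Q::field) \<Rightarrow> 'Q vec \<Rightarrow> nat list \<Rightarrow> 'Q vec \<Rightarrow> 'Q vec \<Rightarrow> nat" where
  "sr_dist phi b ns x y = sr_weight phi b ns (mat_of_row (x - y))"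

(* minimum sum-rank distance of a code C (infinity if C has fewer than two codewords) *)
definition sr_min_dist :: "('q::field \<Rightarrow> 'Q::field) \<Rightarrow> 'Q vec \<Rightarrow> nat list \<Rightarrow> 'Q vec set \<Rightarrow> enat" where
  "sr_min_dist phi b ns C = (INF xy \<in> {(x, y). x \<in> C \<and> y \<in> C \<and> x \<noteq> y}.
       enat (sr_dist phi b ns (fst xy) (snd xy)))"

definition leading :: "'a::zero mat \<Rightarrow> nat \<Rightarrow> nat" where
  "leading A i = (LEAST j. j < dim_col A \<and> A $$ (i, j) \<noteq> 0)"

definition is_ref :: "'a::zero mat \<Rightarrow> bool" where
  "is_ref A \<longleftrightarrow> (\<exists>r \<le> dim_row A.
     (\<forall>i < r. \<exists>j < dim_col A. A $$ (i, j) \<noteq> 0) \<and>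
     (\<forall>i. r \<le> i \<and> i < dim_row A \<longrightarrow> (\<forall>j < dim_col A. A $$ (i, j) = 0)) \<and>
     (\<forall>i. Suc i < r \<longrightarrow> leading A i < leading A (Suc i)))"

definition zero_rows :: "'a::zero mat \<Rightarrow> nat set" where
  "zero_rows A = {i. i < dim_row A \<and> (\<forall>j < dim_col A. A $$ (i, j) = 0)}"

definition rows_sub :: "'a mat \<Rightarrow> nat set \<Rightarrow> 'a mat" where
  "rows_sub M I = mat (card I) (dim_col M) (\<lambda>(r, j). M $$ (sorted_list_of_set I ! r, j))"

end

theory Submission
  imports Defs
begin

lemma divmod_helper: "(l::nat) < m \<Longrightarrow> (i * m + l) div m = i \<and> (i * m + l) mod m = l"
  by simp

lemma mat_vec_unit_col:
  fixes X :: "'a::comm_ring_1 mat"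
  assumes "X \<in> carrier_mat c a" "i < a"
  shows "X *\<^sub>v unit_vec a i = col X i"
  using assms by (intro eq_vecI) (auto simp: scalar_prod_def if_distrib sum.delta' cong: if_cong)

lemma wide_kernel:
  fixes X :: "'a::field mat"
  assumes X: "X \<in> carrier_mat c a" and ca: "c < a"
  shows "\<exists>x. x \<in> carrier_vec a \<and> x \<noteq> 0\<^sub>v a \<and> X *\<^sub>v x = 0\<^sub>v c"
proof (rule ccontr)
  assume nk: "\<not> ?thesis"
  interpret V: vec_space "TYPE('a)" c .
  have dist: "distinct (cols X)"
  proof (rule ccontr)
    assume "\<not> distinct (cols X)"
    then obtain i j where ij: "i < a" "j < a" "i \<noteq> j" "col X i = col X j"
      using X by (auto simp: distinct_conv_nth)
    define x :: "'a vec" where "x = unit_vec a i - unit_vec a j"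
    have xc: "x \<in> carrier_vec a" unfolding x_def by auto
    have "x $ i = 1" unfolding x_def using ij by auto
    hence xn: "x \<noteq> 0\<^sub>v a" using ij by auto
    have "X *\<^sub>v x = X *\<^sub>v unit_vec a i - X *\<^sub>v unit_vec a j"
      unfolding x_def using X by (simp add: mult_minus_distrib_mat_vec)
    also have "\<dots> = 0\<^sub>v c" using ij X by (simp add: mat_vec_unit_col)
    finally show False using nk xc xn by auto
  qed
  have li: "V.lin_indpt (set (cols X))"
  proof
    assume "V.lin_dep (set (cols X))"
    from V.lin_depE[OF X this dist] obtain v where "v \<in> carrier_vec a" "v \<noteq> 0\<^sub>v a" "X *\<^sub>v v = 0\<^sub>v c" by blast
    thus False using nk by auto
  qed
  have sub: "set (cols X) \<subseteq> carrier_vec c" using X by (auto simp: cols_def)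
  have "card (set (cols X)) \<le> V.dim"
    using V.li_le_dim(2)[OF _ _ li] sub by auto
  moreover have "card (set (cols X)) = a" using dist X by (simp add: distinct_card)
  ultimately show False using ca V.dim_is_n by simp
qed

lemma mat_vec_zero[simp]:
  fixes A :: "'a::comm_ring_1 mat"
  assumes "A \<in> carrier_mat n m" shows "A *\<^sub>v 0\<^sub>v m = 0\<^sub>v n"
  using assms by (intro eq_vecI) (auto simp: scalar_prod_def)

definition indep_cols :: "'a::field mat \<Rightarrow> bool" where
  "indep_cols B \<longleftrightarrow> (\<forall>x \<in> carrier_vec (dim_col B). B *\<^sub>v x = 0\<^sub>v (dim_row B) \<longrightarrow> x = 0\<^sub>v (dim_col B))"

lemma assemble_cols:
  fixes C :: "'a::comm_ring_1 mat"
  assumes M: "M \<in> carrier_mat n k" and C: "C \<in> carrier_mat n m"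
    and h: "\<And>j. j < k \<Longrightarrow> \<exists>x \<in> carrier_vec m. col M j = C *\<^sub>v x"
  shows "\<exists>Y \<in> carrier_mat m k. M = C * Y"
proof -
  from h have "\<forall>j. \<exists>x. j < k \<longrightarrow> x \<in> carrier_vec m \<and> col M j = C *\<^sub>v x" by blast
  then obtain xf where xf: "\<And>j. j < k \<Longrightarrow> xf j \<in> carrier_vec m \<and> col M j = C *\<^sub>v xf j"
    by metis
  define Y where "Y = mat m k (\<lambda>(i,j). xf j $ i)"
  have Y: "Y \<in> carrier_mat m k" unfolding Y_def by auto
  have colY: "col Y j = xf j" if "j < k" for j
    using xf[OF that] that unfolding Y_def by (intro eq_vecI) auto
  have "M = C * Y"
  proof (rule eq_matI)
    fix i j assume ij: "i < dim_row (C * Y)" "j < dim_col (C * Y)"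
    hence ij': "i < n" "j < k" using C Y by auto
    have "(C * Y) $$ (i, j) = row C i \<bullet> col Y j" using ij' C Y by simp
    also have "\<dots> = (C *\<^sub>v xf j) $ i" using colY[OF ij'(2)] ij' C by simp
    also have "\<dots> = col M j $ i" using xf[OF ij'(2)] by simp
    also have "\<dots> = M $$ (i, j)" using M ij' by simp
    finally show "M $$ (i, j) = (C * Y) $$ (i, j)" by simp
  qed (use M C Y in auto)
  with Y show ?thesis by blast
qed

lemma rank_decomp:
  fixes A :: "'a::field mat"
  assumes A: "A \<in> carrier_mat n nc"
  shows "\<exists>B X S. B \<in> carrier_mat n (vec_space.rank n A) \<and> X \<in> carrier_mat (vec_space.rank n A) nc
     \<and> S \<in> carrier_mat nc (vec_space.rank n A) \<and> A = B * X \<and> B = A * S \<and> indep_cols B"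
proof -
  interpret V: vec_space "TYPE('a)" n .
  let ?P = "\<lambda>T. T \<subseteq> set (cols A) \<and> V.lin_indpt T"
  have P0: "?P {}"
    by (metis (no_types) empty_subsetI V.fin_dim V.finite_basis_exists V.subset_li_is_li vec_vs vectorspace.basis_def)
  obtain S where fS: "finite S" and mS: "maximal S ?P" "{} \<subseteq> S"
    using maximal_exists_superset[of "set (cols A)" ?P "{}"] P0 by blast
  have Ssub: "S \<subseteq> set (cols A)" and Sli: "V.lin_indpt S" using mS unfolding maximal_def by auto
  have rk: "V.rank A = card S" using V.rank_card_indpt[OF A mS(1)] .
  obtain L where L: "set L = S" "distinct L" using finite_distinct_list[OF fS] by blast
  have lenL: "length L = V.rank A" using L rk distinct_card by fastforce
  have colsA: "set (cols A) \<subseteq> carrier_vec n" using A by (auto simp: cols_def)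
  have Lc: "set L \<subseteq> carrier_vec n" using L Ssub colsA by auto
  define B where "B = mat_of_cols n L"
  have B: "B \<in> carrier_mat n (V.rank A)" unfolding B_def using lenL mat_of_cols_carrier(1)[of n L] by argo
  have colsB: "cols B = L" unfolding B_def using Lc by simp
  have indB: "indep_cols B"
    unfolding indep_cols_def
  proof (intro ballI impI, rule ccontr)
    fix x assume x: "x \<in> carrier_vec (dim_col B)" "B *\<^sub>v x = 0\<^sub>v (dim_row B)" "x \<noteq> 0\<^sub>v (dim_col B)"
    have "V.lin_dep (set (cols B))"
      by (rule V.lin_depI[OF B]) (use x B colsB L in auto)
    thus False using Sli colsB L by simp
  qed
  have span_eq: "V.span S = {y \<in> carrier_vec n. \<exists>x \<in> carrier_vec (V.rank A). B *\<^sub>v x = y}"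
    using V.col_space_eq[OF B] B colsB L unfolding V.col_space_def by auto
  have inspan: "v \<in> V.span S" if v: "v \<in> set (cols A)" for v
  proof (cases "v \<in> S")
    case True thus ?thesis using V.span_mem Ssub colsA by blast
  next
    case False
    have "\<not> ?P (S \<union> {v})"
    proof
      assume "?P (S \<union> {v})"
      with mS(1) have "S \<union> {v} = S" unfolding maximal_def by blast
      with False show False by auto
    qed
    hence "V.lin_dep (S \<union> {v})" using v Ssub by auto
    thus ?thesis using V.lin_dep_iff_in_span[of S v] Ssub colsA Sli v False by auto
  qed
  have "\<exists>X \<in> carrier_mat (V.rank A) nc. A = B * X"
  proof (rule assemble_cols[OF A B])
    fix j assume j: "j < nc"
    have "col A j \<in> set (cols A)" using j A by (simp add: cols_def)
    from inspan[OF this] span_eq obtain x where x: "x \<in> carrier_vec (V.rank A)" "B *\<^sub>v x = col A j" by auto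
    show "\<exists>x\<in>carrier_vec (V.rank A). col A j = B *\<^sub>v x" using x by (intro bexI[of _ x]) auto
  qed
  then obtain X where X: "X \<in> carrier_mat (V.rank A) nc" "A = B * X" by blast
  have "\<exists>S' \<in> carrier_mat nc (V.rank A). B = A * S'"
  proof (rule assemble_cols[OF B A])
    fix j assume j: "j < V.rank A"
    have "col B j \<in> set (cols A)" using j B colsB L Ssub by (metis cols_length cols_nth nth_mem carrier_matD(2) subsetD)
    then obtain i where i: "i < nc" "col B j = col A i" using A by (auto simp: cols_def)
    show "\<exists>x\<in>carrier_vec nc. col B j = A *\<^sub>v x"
      using i A by (intro bexI[of _ "unit_vec nc i"]) (auto simp: mat_vec_unit_col)
  qed
  then obtain S' where S': "S' \<in> carrier_mat nc (V.rank A)" "B = A * S'" by blast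
  show ?thesis using B X S' indB by blast
qed

lemma rank_upper:
  fixes A :: "'a::field mat"
  assumes A: "A \<in> carrier_mat n nc" and C: "C \<in> carrier_mat n c" and Y: "Y \<in> carrier_mat c nc"
    and AE: "A = C * Y"
  shows "vec_space.rank n A \<le> c"
proof (rule ccontr)
  assume "\<not> ?thesis"
  hence lt: "c < vec_space.rank n A" by simp
  obtain B X S where BXS: "B \<in> carrier_mat n (vec_space.rank n A)" "X \<in> carrier_mat (vec_space.rank n A) nc"
     "S \<in> carrier_mat nc (vec_space.rank n A)" "A = B * X" "B = A * S" "indep_cols B"
    using rank_decomp[OF A] by blast
  have YS: "Y * S \<in> carrier_mat c (vec_space.rank n A)" using Y BXS(1-3) by auto
  obtain x where x: "x \<in> carrier_vec (vec_space.rank n A)" "x \<noteq> 0\<^sub>v (vec_space.rank n A)" "(Y * S) *\<^sub>v x = 0\<^sub>v c"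
    using wide_kernel[OF YS lt] by blast
  have "B *\<^sub>v x = ((C * Y) * S) *\<^sub>v x" using BXS(5) AE by simp
  also have "\<dots> = (C * (Y * S)) *\<^sub>v x" using C Y BXS(1-3) by (simp add: assoc_mult_mat)
  also have "\<dots> = C *\<^sub>v ((Y * S) *\<^sub>v x)" using C YS x by (simp add: assoc_mult_mat_vec)
  also have "\<dots> = 0\<^sub>v n" using x C by simp
  finally have "B *\<^sub>v x = 0\<^sub>v n" .
  thus False using BXS(1,6) x unfolding indep_cols_def by auto
qed

lemma rank_transpose_le:
  fixes A :: "'a::field mat"
  assumes A: "A \<in> carrier_mat n nc"
  shows "vec_space.rank nc (A\<^sup>T) \<le> vec_space.rank n A"
proof -
  obtain B X S where BXS: "B \<in> carrier_mat n (vec_space.rank n A)" "X \<in> carrier_mat (vec_space.rank n A) nc"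
     "S \<in> carrier_mat nc (vec_space.rank n A)" "A = B * X" "B = A * S" "indep_cols B"
    using rank_decomp[OF A] by blast
  have "A\<^sup>T = X\<^sup>T * B\<^sup>T" using BXS(1,2,4) by (simp add: transpose_mult)
  thus ?thesis by (intro rank_upper[of _ nc n "X\<^sup>T" _ "B\<^sup>T"]) (use A BXS(1,2) in auto)
qed

lemma rank_transpose:
  fixes A :: "'a::field mat"
  assumes A: "A \<in> carrier_mat n nc"
  shows "vec_space.rank nc (A\<^sup>T) = vec_space.rank n A"
  using rank_transpose_le[OF A] rank_transpose_le[of "A\<^sup>T" nc n] A by auto

lemma span_eq_rank:
  fixes M :: "'a::field mat"
  assumes M: "M \<in> carrier_mat n s" and D: "D \<in> carrier_mat n t" and Y: "Y \<in> carrier_mat t s"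
    and MDY: "M = D * Y" and rk: "vec_space.rank n M = t"
  shows "\<exists>Z \<in> carrier_mat s t. D = M * Z"
proof -
  obtain B X S where BXS: "B \<in> carrier_mat n t" "X \<in> carrier_mat t s"
     "S \<in> carrier_mat s t" "M = B * X" "B = M * S" "indep_cols B"
    using rank_decomp[OF M] rk by metis
  define K where "K = Y * S"
  have K: "K \<in> carrier_mat t t" unfolding K_def using Y BXS(1-3) by auto
  have BK: "B = D * K" unfolding K_def using BXS(5,3) MDY D Y by (simp add: assoc_mult_mat)
  have "det K \<noteq> 0"
  proof
    assume "det K = 0"
    then obtain v where v: "v \<in> carrier_vec t" "v \<noteq> 0\<^sub>v t" "K *\<^sub>v v = 0\<^sub>v t"
      using det_0_iff_vec_prod_zero_field[OF K] by blast
    have "B *\<^sub>v v = D *\<^sub>v (K *\<^sub>v v)" using BK D K v by (simp add: assoc_mult_mat_vec)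
    also have "\<dots> = 0\<^sub>v n" using v D by simp
    finally show False using BXS(1) BXS(6) v unfolding indep_cols_def by auto
  qed
  from det_non_zero_imp_unit[OF K this, of "()"]
  obtain V where V: "V \<in> carrier_mat t t" "K * V = 1\<^sub>m t"
    unfolding Units_def ring_mat_def by auto
  have "D = D * (K * V)" using V D by simp
  also have "\<dots> = (D * K) * V" using D K V by (simp add: assoc_mult_mat)
  also have "\<dots> = (M * S) * V" using BK BXS(5) by simp
  also have "\<dots> = M * (S * V)" using BXS(3) M V by (simp add: assoc_mult_mat)
  finally show ?thesis using BXS(3) V by (intro bexI[of _ "S * V"]) auto
qed


locale extctx =
  fixes phi :: "'q::field \<Rightarrow> 'Q::field" and b :: "'Q vec"
  assumes emb: "is_embedding phi" and basis: "is_basis phi b"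
begin

abbreviation "m \<equiv> dim_vec b"

lemma phi_add: "phi (x + y) = phi x + phi y" using emb unfolding is_embedding_def by auto
lemma phi_mult: "phi (x * y) = phi x * phi y" using emb unfolding is_embedding_def by auto
lemma phi_one: "phi 1 = 1" using emb unfolding is_embedding_def by auto
lemma phi_zero: "phi 0 = 0"
proof -
  have "phi 0 + phi 0 = phi 0 + 0" using phi_add[of 0 0] by simp
  thus ?thesis by (rule add_left_imp_eq)
qed

sublocale ph: field_hom phi
  by unfold_locales (auto simp: phi_add phi_mult phi_one phi_zero)

lemma ext_props: "ext_el phi b \<alpha> \<in> carrier_vec m \<and> lin_comb phi b (ext_el phi b \<alpha>) = \<alpha>"
proof -
  from basis have "\<exists>!c. c \<in> carrier_vec m \<and> lin_comb phi b c = \<alpha>" unfolding is_basis_def by blast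
  thus ?thesis unfolding ext_el_def by (rule theI')
qed

lemma ext_carrier[simp]: "ext_el phi b \<alpha> \<in> carrier_vec m" using ext_props by blast
lemma ext_dim[simp]: "dim_vec (ext_el phi b \<alpha>) = m" using ext_carrier carrier_vecD by blast
lemma ext_lin: "lin_comb phi b (ext_el phi b \<alpha>) = \<alpha>" using ext_props by blast

lemma ext_unique: assumes "c \<in> carrier_vec m" "lin_comb phi b c = \<alpha>" shows "ext_el phi b \<alpha> = c"
proof -
  from basis have "\<exists>!c. c \<in> carrier_vec m \<and> lin_comb phi b c = \<alpha>" unfolding is_basis_def by blast
  thus ?thesis using assms ext_props by blast
qed

lemma lin_comb_add: assumes "c \<in> carrier_vec m" "d \<in> carrier_vec m"
  shows "lin_comb phi b (c + d) = lin_comb phi b c + lin_comb phi b d"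
  using assms unfolding lin_comb_def by (simp add: phi_add distrib_right sum.distrib)

lemma lin_comb_smult: assumes "c \<in> carrier_vec m"
  shows "lin_comb phi b (a \<cdot>\<^sub>v c) = phi a * lin_comb phi b c"
  using assms unfolding lin_comb_def by (simp add: phi_mult sum_distrib_left mult.assoc)

lemma ext_add: "ext_el phi b (x + y) = ext_el phi b x + ext_el phi b y"
  by (rule ext_unique) (auto simp: lin_comb_add ext_lin)

lemma ext_smult: "ext_el phi b (phi a * x) = a \<cdot>\<^sub>v ext_el phi b x"
  by (rule ext_unique) (auto simp: lin_comb_smult ext_lin)

lemma ext_zero: "ext_el phi b 0 = 0\<^sub>v m"
  by (rule ext_unique) (auto simp: lin_comb_def phi_zero)

lemma ext_eq0: assumes "ext_el phi b x = 0\<^sub>v m" shows "x = 0"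
proof -
  have "x = lin_comb phi b (ext_el phi b x)" using ext_lin by simp
  also have "\<dots> = 0" using assms by (simp add: lin_comb_def phi_zero)
  finally show ?thesis .
qed

lemma ext_add_nth: "l < m \<Longrightarrow> ext_el phi b (x + y) $ l = ext_el phi b x $ l + ext_el phi b y $ l"
  by (simp add: ext_add)

lemma ext_smult_nth: "l < m \<Longrightarrow> ext_el phi b (phi a * x) $ l = a * ext_el phi b x $ l"
  by (simp add: ext_smult)

lemma ext_zero_nth: "l < m \<Longrightarrow> ext_el phi b 0 $ l = 0"
  by (simp add: ext_zero)

lemma ext_sum_nth: assumes "finite I" "l < m"
  shows "ext_el phi b (\<Sum>i\<in>I. f i) $ l = (\<Sum>i\<in>I. ext_el phi b (f i) $ l)"
  using assms(1) by (induct rule: finite_induct) (auto simp: ext_zero_nth ext_add_nth assms(2))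

lemma ext_neg_nth: "l < m \<Longrightarrow> ext_el phi b (- x) $ l = - (ext_el phi b x $ l)"
proof -
  assume l: "l < m"
  have "ext_el phi b (- x) $ l + ext_el phi b x $ l = 0"
    using ext_add_nth[OF l, of "-x" x] ext_zero_nth[OF l] by simp
  thus ?thesis by (simp add: eq_neg_iff_add_eq_0)
qed

lemma ext_mul_nth: assumes l: "l < m"
  shows "ext_el phi b (z * x) $ l = (\<Sum>l'<m. ext_el phi b (z * b $ l') $ l * ext_el phi b x $ l')"
proof -
  have "x = (\<Sum>l'<m. phi (ext_el phi b x $ l') * b $ l')"
    using ext_lin[of x] unfolding lin_comb_def by simp
  hence "z * x = (\<Sum>l'<m. phi (ext_el phi b x $ l') * (z * b $ l'))"
    by (metis (no_types, lifting) mult.left_commute sum.cong sum_distrib_left)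
  hence "ext_el phi b (z * x) $ l = ext_el phi b (\<Sum>l'<m. phi (ext_el phi b x $ l') * (z * b $ l')) $ l"
    by simp
  also have "\<dots> = (\<Sum>l'<m. ext_el phi b (phi (ext_el phi b x $ l') * (z * b $ l')) $ l)"
    by (rule ext_sum_nth[OF finite_lessThan l])
  also have "\<dots> = (\<Sum>l'<m. ext_el phi b (z * b $ l') $ l * ext_el phi b x $ l')"
    by (rule sum.cong[OF refl], subst ext_smult_nth[OF l], simp add: mult.commute)
  finally show ?thesis .
qed

lemma ext_phi_nth: "l < m \<Longrightarrow> ext_el phi b (phi a) $ l = a * ext_el phi b 1 $ l"
  using ext_smult_nth[of l a 1] by simp

lemma ext_one_nz: "\<exists>l < m. ext_el phi b 1 $ l \<noteq> 0"
proof (rule ccontr)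
  assume "\<not> ?thesis"
  hence "ext_el phi b 1 = 0\<^sub>v m" by (intro eq_vecI) auto
  hence "(1::'Q) = 0" by (rule ext_eq0)
  thus False by simp
qed

lemma ext_mat_mult_vec:
  assumes A: "A \<in> carrier_mat a c" and w: "w \<in> carrier_vec c" and p: "p < a * m"
  shows "(ext_mat phi b A *\<^sub>v w) $ p = ext_el phi b ((A *\<^sub>v map_vec phi w) $ (p div m)) $ (p mod m)"
proof -
  have m0: "0 < m" using p by (cases m) auto
  have pd: "p div m < a" using p by (simp add: less_mult_imp_div_less)
  have pm: "p mod m < m" using m0 by simp
  have "(ext_mat phi b A *\<^sub>v w) $ p = (\<Sum>j<c. ext_el phi b (A $$ (p div m, j)) $ (p mod m) * w $ j)"
    using A w p unfolding ext_mat_def by (auto simp: scalar_prod_def lessThan_atLeast0 mult.commute)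
  also have "\<dots> = ext_el phi b (\<Sum>j<c. phi (w $ j) * A $$ (p div m, j)) $ (p mod m)"
    by (subst ext_sum_nth[OF _ pm]) (auto simp: ext_smult_nth[OF pm] mult.commute)
  also have "(\<Sum>j<c. phi (w $ j) * A $$ (p div m, j)) = (A *\<^sub>v map_vec phi w) $ (p div m)"
    using A w pd by (auto simp: scalar_prod_def lessThan_atLeast0 mult.commute)
  finally show ?thesis .
qed

lemma ext_mat_kernel_iff:
  assumes A: "A \<in> carrier_mat a c" and w: "w \<in> carrier_vec c" and m0: "0 < m"
  shows "ext_mat phi b A *\<^sub>v w = 0\<^sub>v (a * m) \<longleftrightarrow> A *\<^sub>v map_vec phi w = 0\<^sub>v a"
proof
  assume h: "ext_mat phi b A *\<^sub>v w = 0\<^sub>v (a * m)"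
  show "A *\<^sub>v map_vec phi w = 0\<^sub>v a"
  proof (rule eq_vecI)
    fix i assume i: "i < dim_vec (0\<^sub>v a :: 'Q vec)"
    hence i': "i < a" by simp
    have "ext_el phi b ((A *\<^sub>v map_vec phi w) $ i) = 0\<^sub>v m"
    proof (rule eq_vecI)
      fix l assume "l < dim_vec (0\<^sub>v m :: 'q vec)"
      hence l: "l < m" by simp
      have "i * m + l < (i+1) * m" using l by simp
      also have "\<dots> \<le> a * m" using i' by (intro mult_right_mono) auto
      finally have p: "i * m + l < a * m" .
      have d: "(i * m + l) div m = i" "(i * m + l) mod m = l" using divmod_helper[OF l] by auto
      from d ext_mat_mult_vec[OF A w p] h p show "ext_el phi b ((A *\<^sub>v map_vec phi w) $ i) $ l = 0\<^sub>v m $ l"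
        using l by auto
    qed auto
    thus "(A *\<^sub>v map_vec phi w) $ i = 0\<^sub>v a $ i" using ext_eq0 i' by auto
  qed (use A in auto)
next
  assume h: "A *\<^sub>v map_vec phi w = 0\<^sub>v a"
  show "ext_mat phi b A *\<^sub>v w = 0\<^sub>v (a * m)"
  proof (rule eq_vecI)
    fix p assume "p < dim_vec (0\<^sub>v (a * m) :: 'q vec)"
    hence p: "p < a * m" by simp
    have pd: "p div m < a" using p by (simp add: less_mult_imp_div_less)
    show "(ext_mat phi b A *\<^sub>v w) $ p = 0\<^sub>v (a * m) $ p"
      using ext_mat_mult_vec[OF A w p] h pd p m0 by (simp add: ext_zero)
  qed (use A in \<open>auto simp: ext_mat_def\<close>)
qed

end


lemma off_Suc: "j < length ns \<Longrightarrow> blk_off ns (Suc j) = blk_off ns j + ns ! j"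
  unfolding blk_off_def by (simp add: take_Suc_conv_app_nth)

lemma off_mono: "j \<le> j' \<Longrightarrow> blk_off ns j \<le> blk_off ns j'"
proof -
  assume "j \<le> j'"
  then obtain d where "j' = j + d" by (metis le_add_diff_inverse)
  thus ?thesis unfolding blk_off_def
    by (metis le_add1 sum_list_append take_add)
qed

lemma off_len: "blk_off ns (length ns) = sum_list ns"
  unfolding blk_off_def by simp

lemma off_0: "blk_off ns 0 = 0"
  unfolding blk_off_def by simp

lemma off_le: "j < length ns \<Longrightarrow> blk_off ns j + ns ! j \<le> sum_list ns"
  using off_Suc[of j ns] off_mono[of "Suc j" "length ns" ns] off_len[of ns] by simp

definition embv :: "nat list \<Rightarrow> nat \<Rightarrow> 'a::zero vec \<Rightarrow> 'a vec" where
  "embv ns j x = vec (sum_list ns) (\<lambda>c. if blk_off ns j \<le> c \<and> c < blk_off ns j + ns ! j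
      then x $ (c - blk_off ns j) else 0)"

definition embm :: "nat list \<Rightarrow> nat \<Rightarrow> 'a::zero mat \<Rightarrow> 'a mat" where
  "embm ns j M = mat (sum_list ns) (dim_col M) (\<lambda>(c, a). if blk_off ns j \<le> c \<and> c < blk_off ns j + ns ! j
      then M $$ (c - blk_off ns j, a) else 0)"

definition subv :: "nat list \<Rightarrow> nat \<Rightarrow> 'a vec \<Rightarrow> 'a vec" where
  "subv ns j v = vec (ns ! j) (\<lambda>x. v $ (blk_off ns j + x))"

lemma embv_carrier[simp]: "embv ns j x \<in> carrier_vec (sum_list ns)"
  unfolding embv_def by simp
lemma embm_carrier[simp]: "embm ns j M \<in> carrier_mat (sum_list ns) (dim_col M)"
  unfolding embm_def by simp
lemma subv_carrier[simp]: "subv ns j v \<in> carrier_vec (ns ! j)"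
  unfolding subv_def by simp

lemma sum_block:
  assumes j: "j < length ns"
  shows "(\<Sum>c<sum_list ns. if blk_off ns j \<le> c \<and> c < blk_off ns j + ns ! j then f (c - blk_off ns j) else 0)
     = (\<Sum>x<ns ! j. (f x :: 'a::comm_monoid_add))"
proof -
  let ?o = "blk_off ns j"
  have sub: "{?o..<?o + ns ! j} \<subseteq> {..<sum_list ns}" using off_le[OF j] by auto
  have "(\<Sum>c<sum_list ns. if ?o \<le> c \<and> c < ?o + ns ! j then f (c - ?o) else 0)
      = (\<Sum>c\<in>{..<sum_list ns}. if c \<in> {?o..<?o + ns ! j} then f (c - ?o) else 0)"
    by (rule sum.cong) auto
  also have "\<dots> = (\<Sum>c\<in>{..<sum_list ns} \<inter> {?o..<?o + ns ! j}. f (c - ?o))"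
    by (rule sum.inter_restrict[symmetric]) simp
  also have "{..<sum_list ns} \<inter> {?o..<?o + ns ! j} = {?o..<?o + ns ! j}" using sub by auto
  also have "(\<Sum>c\<in>{?o..<?o + ns ! j}. f (c - ?o)) = (\<Sum>x\<in>{0..<ns ! j}. f x)"
    by (rule sum.reindex_bij_witness[of _ "\<lambda>x. x + ?o" "\<lambda>c. c - ?o"]) auto
  finally show ?thesis by (simp add: lessThan_atLeast0)
qed

lemma mult_embv:
  fixes M :: "'a::comm_ring_1 mat"
  assumes M: "M \<in> carrier_mat a (sum_list ns)" and j: "j < length ns" and x: "x \<in> carrier_vec (ns ! j)"
  shows "M *\<^sub>v embv ns j x = blk ns M j *\<^sub>v x"
proof (rule eq_vecI)
  fix i assume "i < dim_vec (blk ns M j *\<^sub>v x)"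
  hence i: "i < a" using M unfolding blk_def by simp
  have "(M *\<^sub>v embv ns j x) $ i = (\<Sum>c<sum_list ns. M $$ (i, c) * embv ns j x $ c)"
    using M i by (auto simp: scalar_prod_def lessThan_atLeast0 embv_def intro!: sum.cong)
  also have "\<dots> = (\<Sum>c<sum_list ns. if blk_off ns j \<le> c \<and> c < blk_off ns j + ns ! j
      then M $$ (i, blk_off ns j + (c - blk_off ns j)) * x $ (c - blk_off ns j) else 0)"
    by (rule sum.cong) (auto simp: embv_def)
  also have "\<dots> = (\<Sum>y<ns ! j. M $$ (i, blk_off ns j + y) * x $ y)"
    by (rule sum_block[OF j])
  also have "\<dots> = (blk ns M j *\<^sub>v x) $ i"
    using M i x by (simp add: blk_def scalar_prod_def lessThan_atLeast0)
  finally show "(M *\<^sub>v embv ns j x) $ i = (blk ns M j *\<^sub>v x) $ i" .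
qed (use M in \<open>auto simp: blk_def\<close>)

lemma embm_mult:
  fixes M :: "'a::comm_ring_1 mat"
  assumes M: "M \<in> carrier_mat (ns ! j) k" and w: "w \<in> carrier_vec k"
  shows "embm ns j M *\<^sub>v w = embv ns j (M *\<^sub>v w)"
  using M w by (intro eq_vecI) (auto simp: embm_def embv_def scalar_prod_def)

lemma subv_mult:
  fixes M :: "'a::comm_ring_1 mat"
  assumes M: "M \<in> carrier_mat s (sum_list ns)" and j: "j < length ns" and z: "z \<in> carrier_vec s"
  shows "subv ns j (M\<^sup>T *\<^sub>v z) = (blk ns M j)\<^sup>T *\<^sub>v z"
proof (rule eq_vecI)
  fix x assume "x < dim_vec ((blk ns M j)\<^sup>T *\<^sub>v z)"
  hence x: "x < ns ! j" unfolding blk_def by simp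
  have ox: "blk_off ns j + x < sum_list ns" using off_le[OF j] x by simp
  show "subv ns j (M\<^sup>T *\<^sub>v z) $ x = ((blk ns M j)\<^sup>T *\<^sub>v z) $ x"
    using M z x ox by (simp add: subv_def blk_def scalar_prod_def)
qed (simp add: subv_def blk_def)

lemma subv_embv:
  assumes j: "j < length ns" and j': "j' < length ns" and x: "x \<in> carrier_vec (ns ! j)"
  shows "subv ns j' (embv ns j x) = (if j' = j then x else 0\<^sub>v (ns ! j'))"
proof (rule eq_vecI)
  fix y assume "y < dim_vec (if j' = j then x else 0\<^sub>v (ns ! j'))"
  hence y: "y < ns ! j'" using x by (auto split: if_splits)
  have oy: "blk_off ns j' + y < sum_list ns" using off_le[OF j'] y by simp
  show "subv ns j' (embv ns j x) $ y = (if j' = j then x else 0\<^sub>v (ns ! j')) $ y"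
  proof (cases "j' = j")
    case True thus ?thesis using oy y by (simp add: subv_def embv_def)
  next
    case False
    have "\<not> (blk_off ns j \<le> blk_off ns j' + y \<and> blk_off ns j' + y < blk_off ns j + ns ! j)"
    proof (cases "j < j'")
      case True
      hence "blk_off ns (Suc j) \<le> blk_off ns j'" by (intro off_mono) simp
      thus ?thesis using off_Suc[OF j] by simp
    next
      case c: False
      with False have "j' < j" by simp
      hence "blk_off ns (Suc j') \<le> blk_off ns j" by (intro off_mono) simp
      thus ?thesis using off_Suc[OF j'] y by simp
    qed
    thus ?thesis using False oy y by (auto simp: subv_def embv_def)
  qed
qed (use x in auto)

lemma block_induct:
  fixes e :: "'a::comm_monoid_add vec"
  assumes e: "e \<in> carrier_vec (sum_list ns)"
    and P0: "P (0\<^sub>v (sum_list ns))"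
    and Padd: "\<And>u v. u \<in> carrier_vec (sum_list ns) \<Longrightarrow> v \<in> carrier_vec (sum_list ns) \<Longrightarrow> P u \<Longrightarrow> P v \<Longrightarrow> P (u + v)"
    and Pblk: "\<And>j. j < length ns \<Longrightarrow> P (embv ns j (subv ns j e))"
  shows "P e"
proof -
  define tr where "tr J = vec (sum_list ns) (\<lambda>c. if c < blk_off ns J then e $ c else 0)" for J
  have "P (tr J)" if "J \<le> length ns" for J
    using that
  proof (induct J)
    case 0
    have "tr 0 = 0\<^sub>v (sum_list ns)" unfolding tr_def by (intro eq_vecI) (auto simp: off_0)
    thus ?case using P0 by simp
  next
    case (Suc J)
    hence J: "J < length ns" by simp
    have "tr (Suc J) = tr J + embv ns J (subv ns J e)"
      unfolding tr_def using off_Suc[OF J] off_le[OF J]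
      by (intro eq_vecI) (auto simp: embv_def subv_def)
    thus ?case using Suc Padd[of "tr J" "embv ns J (subv ns J e)"] Pblk[OF J] by (simp add: tr_def)
  qed
  moreover have "tr (length ns) = e" unfolding tr_def using e off_len[of ns] by (intro eq_vecI) auto
  ultimately show ?thesis by (metis order_refl)
qed


lemma leading_props:
  fixes A :: "'a::field mat"
  assumes "\<exists>j < dim_col A. A $$ (i, j) \<noteq> 0"
  shows "leading A i < dim_col A" "A $$ (i, leading A i) \<noteq> 0"
    "\<And>c. c < leading A i \<Longrightarrow> A $$ (i, c) = 0"
proof -
  have ex: "\<exists>j. j < dim_col A \<and> A $$ (i, j) \<noteq> 0" using assms by blast
  show "leading A i < dim_col A" "A $$ (i, leading A i) \<noteq> 0"
    using LeastI_ex[OF ex] unfolding leading_def by auto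
  fix c assume c: "c < leading A i"
  have "c < dim_col A" using c LeastI_ex[OF ex] unfolding leading_def by auto
  thus "A $$ (i, c) = 0" using not_less_Least[of c "\<lambda>j. j < dim_col A \<and> A $$ (i, j) \<noteq> 0"] c
    unfolding leading_def by auto
qed

lemma rows_sub_range:
  assumes "A \<in> carrier_mat N n" "r \<le> N"
  shows "rows_sub A {r..<N} = mat (N - r) n (\<lambda>(a, c). A $$ (r + a, c))"
  using assms unfolding rows_sub_def by (intro eq_matI) auto

lemma ref_solve:
  fixes A :: "'a::field mat"
  assumes A: "A \<in> carrier_mat N s" and r: "r \<le> N"
    and nz: "\<forall>i < r. \<exists>j < s. A $$ (i, j) \<noteq> 0"
    and z: "\<forall>i. r \<le> i \<and> i < N \<longrightarrow> (\<forall>j < s. A $$ (i, j) = 0)"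
    and inc: "\<forall>i. Suc i < r \<longrightarrow> leading A i < leading A (Suc i)"
    and y: "y \<in> carrier_vec N" and y0: "\<forall>i. r \<le> i \<and> i < N \<longrightarrow> y $ i = 0"
  shows "\<exists>x \<in> carrier_vec s. A *\<^sub>v x = y"
proof -
  define ld where "ld = leading A"
  have ldp: "ld i < s" "A $$ (i, ld i) \<noteq> 0" "\<And>c. c < ld i \<Longrightarrow> A $$ (i, c) = 0" if "i < r" for i
    using leading_props[of A i] nz that A unfolding ld_def by auto
  have mono: "ld i < ld i'" if "i < i'" "i' < r" for i i'
    using that
  proof (induct i' arbitrary: i)
    case 0 thus ?case by simp
  next
    case (Suc i')
    have step: "ld i' < ld (Suc i')" using inc Suc(3) unfolding ld_def by auto
    show ?case
    proof (cases "i = i'")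
      case True thus ?thesis using step by simp
    next
      case False
      hence "i < i'" using Suc(2) by simp
      hence "ld i < ld i'" using Suc(1)[of i] Suc(3) by simp
      thus ?thesis using step by simp
    qed
  qed
  have inj: "inj_on ld {..<r}"
    by (rule inj_onI) (metis lessThan_iff linorder_neqE_nat mono less_irrefl)
  define K where "K = mat r r (\<lambda>(a, c). A $$ (a, ld c))"
  have K: "K \<in> carrier_mat r r" unfolding K_def by simp
  have ut: "upper_triangular K"
    unfolding upper_triangular_def K_def using ldp(3) mono by auto
  have "det K = prod_list (diag_mat K)" by (rule det_upper_triangular[OF ut K])
  also have "\<dots> \<noteq> 0"
    unfolding prod_list_diag_prod using K ldp(2) by (auto simp: K_def)
  finally have dK: "det K \<noteq> 0" .
  from det_non_zero_imp_unit[OF K dK, of "()"]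
  obtain V where V: "V \<in> carrier_mat r r" "K * V = 1\<^sub>m r"
    unfolding Units_def ring_mat_def by auto
  define y' where "y' = vec r (\<lambda>a. y $ a)"
  define u where "u = V *\<^sub>v y'"
  have u: "u \<in> carrier_vec r" unfolding u_def y'_def using V by simp
  have y'c: "y' \<in> carrier_vec r" unfolding y'_def by simp
  have "K *\<^sub>v u = (K * V) *\<^sub>v y'" unfolding u_def by (rule assoc_mult_mat_vec[OF K V(1) y'c, symmetric])
  also have "\<dots> = y'" using V y'c by simp
  finally have Ku: "K *\<^sub>v u = y'" .
  define invl where "invl c = (THE b. b < r \<and> ld b = c)" for c
  have invl: "invl (ld b) = b" if "b < r" for b
    unfolding invl_def
  proof (rule the_equality)
    show "b < r \<and> ld b = ld b" using that by simp
    fix b' assume "b' < r \<and> ld b' = ld b"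
    thus "b' = b" using inj that by (auto dest: inj_onD)
  qed
  define x where "x = vec s (\<lambda>c. if c \<in> ld ` {..<r} then u $ invl c else 0)"
  have x: "x \<in> carrier_vec s" unfolding x_def by simp
  have ldsub: "ld ` {..<r} \<subseteq> {..<s}" using ldp(1) by auto
  have sumx: "(A *\<^sub>v x) $ i = (\<Sum>b<r. A $$ (i, ld b) * u $ b)" if i: "i < N" for i
  proof -
    have "(A *\<^sub>v x) $ i = (\<Sum>c\<in>{..<s}. A $$ (i, c) * x $ c)"
      using A i x by (simp add: scalar_prod_def lessThan_atLeast0)
    also have "\<dots> = (\<Sum>c\<in>{..<s}. if c \<in> ld ` {..<r} then A $$ (i, c) * u $ invl c else 0)"
      by (rule sum.cong) (auto simp: x_def)
    also have "\<dots> = (\<Sum>c\<in>{..<s} \<inter> ld ` {..<r}. A $$ (i, c) * u $ invl c)"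
      by (rule sum.inter_restrict[symmetric]) simp
    also have "{..<s} \<inter> ld ` {..<r} = ld ` {..<r}" using ldsub by auto
    also have "(\<Sum>c\<in>ld ` {..<r}. A $$ (i, c) * u $ invl c) = (\<Sum>b<r. A $$ (i, ld b) * u $ invl (ld b))"
      using sum.reindex[OF inj, of "\<lambda>c. A $$ (i, c) * u $ invl c"] by simp
    also have "\<dots> = (\<Sum>b<r. A $$ (i, ld b) * u $ b)" by (rule sum.cong) (auto simp: invl)
    finally show ?thesis .
  qed
  have "A *\<^sub>v x = y"
  proof (rule eq_vecI)
    fix i assume "i < dim_vec y"
    hence i: "i < N" using y by simp
    show "(A *\<^sub>v x) $ i = y $ i"
    proof (cases "i < r")
      case True
      have "(K *\<^sub>v u) $ i = (\<Sum>b<r. A $$ (i, ld b) * u $ b)"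
        using True K u by (simp add: K_def scalar_prod_def lessThan_atLeast0)
      thus ?thesis using sumx[OF i] Ku True by (simp add: y'_def)
    next
      case False
      hence "r \<le> i" by simp
      hence "(\<Sum>b<r. A $$ (i, ld b) * u $ b) = 0" using z i ldp(1) by auto
      thus ?thesis using sumx[OF i] y0 False i by simp
    qed
  qed (use A y in auto)
  with x show ?thesis by blast
qed


lemma sum_split_mult:
  fixes g :: "nat \<Rightarrow> 'a::comm_monoid_add"
  shows "(\<Sum>p<s*m. g p) = (\<Sum>r<s. \<Sum>l<m. g (r*m + l))"
proof (induct s)
  case 0 thus ?case by simp
next
  case (Suc s)
  have "(\<Sum>p<Suc s * m. g p) = (\<Sum>p\<in>{0..<s*m}. g p) + (\<Sum>p\<in>{s*m..<s*m+m}. g p)"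
    by (subst sum.atLeastLessThan_concat) (auto simp: lessThan_atLeast0 add.commute)
  also have "(\<Sum>p\<in>{s*m..<s*m+m}. g p) = (\<Sum>l<m. g (s*m + l))"
    by (rule sum.reindex_bij_witness[of _ "\<lambda>l. s*m + l" "\<lambda>p. p - s*m"]) auto
  finally show ?case using Suc by (simp add: lessThan_atLeast0)
qed

context extctx
begin

definition Extv :: "'Q vec \<Rightarrow> 'q mat" where
  "Extv y = mat m (dim_vec y) (\<lambda>(l, x). ext_el phi b (y $ x) $ l)"

lemma ext_comb_cols:
  assumes M: "M \<in> carrier_mat s nj" and z: "z \<in> carrier_vec s" and l: "l < m"
  shows "vec nj (\<lambda>x. ext_el phi b ((M\<^sup>T *\<^sub>v z) $ x) $ l)
     = (ext_mat phi b M)\<^sup>T *\<^sub>v vec (s*m) (\<lambda>p. ext_el phi b (z $ (p div m) * b $ (p mod m)) $ l)"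
proof (rule eq_vecI)
  fix x assume "x < dim_vec ((ext_mat phi b M)\<^sup>T *\<^sub>v vec (s*m) (\<lambda>p. ext_el phi b (z $ (p div m) * b $ (p mod m)) $ l))"
  hence x: "x < nj" using M by (simp add: ext_mat_def)
  have "ext_el phi b ((M\<^sup>T *\<^sub>v z) $ x) $ l = ext_el phi b (\<Sum>r<s. z $ r * M $$ (r, x)) $ l"
    using M z x by (simp add: scalar_prod_def lessThan_atLeast0 mult.commute)
  also have "\<dots> = (\<Sum>r<s. ext_el phi b (z $ r * M $$ (r, x)) $ l)"
    by (rule ext_sum_nth[OF finite_lessThan l])
  also have "\<dots> = (\<Sum>r<s. \<Sum>l'<m. ext_el phi b (z $ r * b $ l') $ l * ext_el phi b (M $$ (r, x)) $ l')"
    by (rule sum.cong[OF refl], rule ext_mul_nth[OF l])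
  also have "\<dots> = (\<Sum>p<s*m. ext_el phi b (M $$ (p div m, x)) $ (p mod m) * ext_el phi b (z $ (p div m) * b $ (p mod m)) $ l)"
    by (subst sum_split_mult) (auto intro!: sum.cong simp: divmod_helper mult.commute)
  also have "\<dots> = ((ext_mat phi b M)\<^sup>T *\<^sub>v vec (s*m) (\<lambda>p. ext_el phi b (z $ (p div m) * b $ (p mod m)) $ l)) $ x"
    using M x by (simp add: ext_mat_def scalar_prod_def lessThan_atLeast0)
  finally show "vec nj (\<lambda>x. ext_el phi b ((M\<^sup>T *\<^sub>v z) $ x) $ l) $ x = \<dots>" using x by simp
qed (use M in \<open>simp add: ext_mat_def\<close>)

lemma ext_blk_row:
  assumes c: "c \<in> carrier_vec (sum_list ns)" and j: "j < length ns"
  shows "ext_mat phi b (blk ns (mat_of_row c) j) = Extv (subv ns j c)"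
proof (rule eq_matI)
  fix l x assume lx: "l < dim_row (Extv (subv ns j c))" "x < dim_col (Extv (subv ns j c))"
  hence l: "l < m" and x: "x < ns ! j" by (auto simp: Extv_def subv_def)
  have ox: "blk_off ns j + x < sum_list ns" using off_le[OF j] x by simp
  show "ext_mat phi b (blk ns (mat_of_row c) j) $$ (l, x) = Extv (subv ns j c) $$ (l, x)"
    using l x ox c by (simp add: ext_mat_def blk_def Extv_def subv_def mat_of_row_def)
qed (auto simp: ext_mat_def blk_def Extv_def mat_of_row_def subv_def)

lemma rank_Extv_bound:
  assumes y: "y \<in> carrier_vec nj" and C: "C \<in> carrier_mat nj k"
    and h: "\<And>l. l < m \<Longrightarrow> \<exists>u \<in> carrier_vec k. vec nj (\<lambda>x. ext_el phi b (y $ x) $ l) = C *\<^sub>v u"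
  shows "vec_space.rank m (Extv y) \<le> k"
proof -
  have E: "Extv y \<in> carrier_mat m nj" using y by (simp add: Extv_def)
  have ET: "(Extv y)\<^sup>T \<in> carrier_mat nj m" using E by simp
  have "\<exists>U \<in> carrier_mat k m. (Extv y)\<^sup>T = C * U"
  proof (rule assemble_cols[OF ET C])
    fix l assume l: "l < m"
    have "col (Extv y)\<^sup>T l = vec nj (\<lambda>x. ext_el phi b (y $ x) $ l)"
      using l y by (intro eq_vecI) (auto simp: Extv_def)
    thus "\<exists>x\<in>carrier_vec k. col (Extv y)\<^sup>T l = C *\<^sub>v x" using h[OF l] by metis
  qed
  then obtain U where U: "U \<in> carrier_mat k m" "(Extv y)\<^sup>T = C * U" by blast
  have "vec_space.rank nj ((Extv y)\<^sup>T) \<le> k" by (rule rank_upper[OF ET C U(1) U(2)])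
  thus ?thesis using rank_transpose[OF E] by simp
qed

end


context extctx
begin

lemma row_decomp:
  assumes M: "M \<in> carrier_mat s nj" and B: "B \<in> carrier_mat nj tt" and X: "X \<in> carrier_mat tt (s * m)"
    and GBX: "(ext_mat phi b M)\<^sup>T = B * X" and r0: "r0 < s"
  shows "vec nj (\<lambda>x. M $$ (r0, x)) = map_mat phi B *\<^sub>v vec tt (\<lambda>a. \<Sum>l<m. phi (X $$ (a, r0 * m + l)) * b $ l)"
proof (rule eq_vecI)
  fix x assume "x < dim_vec (map_mat phi B *\<^sub>v vec tt (\<lambda>a. \<Sum>l<m. phi (X $$ (a, r0 * m + l)) * b $ l))"
  hence x: "x < nj" using B by simp
  have "M $$ (r0, x) = lin_comb phi b (ext_el phi b (M $$ (r0, x)))" using ext_lin by simp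
  also have "\<dots> = (\<Sum>l<m. phi (ext_el phi b (M $$ (r0, x)) $ l) * b $ l)" unfolding lin_comb_def by simp
  also have "\<dots> = (\<Sum>l<m. phi (\<Sum>a<tt. B $$ (x, a) * X $$ (a, r0 * m + l)) * b $ l)"
  proof (rule sum.cong[OF refl])
    fix l assume "l \<in> {..<m}"
    hence l: "l < m" by simp
    have p: "r0 * m + l < s * m"
    proof -
      have "r0 * m + l < (r0 + 1) * m" using l by simp
      also have "\<dots> \<le> s * m" using r0 by (intro mult_right_mono) auto
      finally show ?thesis .
    qed
    have "ext_el phi b (M $$ (r0, x)) $ l = (ext_mat phi b M)\<^sup>T $$ (x, r0 * m + l)"
      using M x p divmod_helper[OF l, of r0] by (simp add: ext_mat_def)
    also have "\<dots> = (B * X) $$ (x, r0 * m + l)" using GBX by simp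
    also have "\<dots> = (\<Sum>a<tt. B $$ (x, a) * X $$ (a, r0 * m + l))"
      using B X x p by (simp add: scalar_prod_def lessThan_atLeast0)
    finally show "phi (ext_el phi b (M $$ (r0, x)) $ l) * b $ l = phi (\<Sum>a<tt. B $$ (x, a) * X $$ (a, r0 * m + l)) * b $ l"
      by simp
  qed
  also have "\<dots> = (\<Sum>l<m. \<Sum>a<tt. phi (B $$ (x, a)) * (phi (X $$ (a, r0 * m + l)) * b $ l))"
    by (simp add: ph.hom_sum phi_mult sum_distrib_right mult.assoc)
  also have "\<dots> = (\<Sum>a<tt. phi (B $$ (x, a)) * (\<Sum>l<m. phi (X $$ (a, r0 * m + l)) * b $ l))"
    by (subst sum.swap) (simp add: sum_distrib_left)
  also have "\<dots> = (map_mat phi B *\<^sub>v vec tt (\<lambda>a. \<Sum>l<m. phi (X $$ (a, r0 * m + l)) * b $ l)) $ x"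
    using B x by (simp add: scalar_prod_def lessThan_atLeast0)
  finally show "vec nj (\<lambda>x. M $$ (r0, x)) $ x = \<dots>" using x by simp
qed (use B in simp)

lemma comb_in_B:
  assumes M: "M \<in> carrier_mat s nj" and B: "B \<in> carrier_mat nj tt" and X: "X \<in> carrier_mat tt (s * m)"
    and GBX: "(ext_mat phi b M)\<^sup>T = B * X" and z: "z \<in> carrier_vec s" and l: "l < m"
  shows "\<exists>u \<in> carrier_vec tt. vec nj (\<lambda>x. ext_el phi b ((M\<^sup>T *\<^sub>v z) $ x) $ l) = B *\<^sub>v u"
proof -
  define U where "U = vec (s * m) (\<lambda>p. ext_el phi b (z $ (p div m) * b $ (p mod m)) $ l)"
  have U: "U \<in> carrier_vec (s * m)" unfolding U_def by simp
  have "vec nj (\<lambda>x. ext_el phi b ((M\<^sup>T *\<^sub>v z) $ x) $ l) = (ext_mat phi b M)\<^sup>T *\<^sub>v U"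
    unfolding U_def by (rule ext_comb_cols[OF M z l])
  also have "\<dots> = B *\<^sub>v (X *\<^sub>v U)" unfolding GBX by (rule assoc_mult_mat_vec[OF B X U])
  finally show ?thesis using X U by (intro bexI[of _ "X *\<^sub>v U"]) auto
qed

lemma rank_bound_comb:
  assumes M: "M \<in> carrier_mat s nj" and B: "B \<in> carrier_mat nj tt" and X: "X \<in> carrier_mat tt (s * m)"
    and GBX: "(ext_mat phi b M)\<^sup>T = B * X" and z: "z \<in> carrier_vec s"
  shows "vec_space.rank m (Extv (M\<^sup>T *\<^sub>v z)) \<le> tt"
  by (rule rank_Extv_bound[OF _ B]) (use M z comb_in_B[OF M B X GBX z] in auto)

lemma rank_bound_comb1:
  assumes M: "M \<in> carrier_mat s nj" and B: "B \<in> carrier_mat nj tt" and X: "X \<in> carrier_mat tt (s * m)"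
    and GBX: "(ext_mat phi b M)\<^sup>T = B * X" and z: "z \<in> carrier_vec s" and w: "w \<in> carrier_vec nj"
  shows "vec_space.rank m (Extv (map_vec phi w + M\<^sup>T *\<^sub>v z)) \<le> tt + 1"
proof (rule rank_Extv_bound)
  show "map_vec phi w + M\<^sup>T *\<^sub>v z \<in> carrier_vec nj" using w M z by (intro add_carrier_vec) auto
  define C where "C = mat nj (tt + 1) (\<lambda>(x, a). if a < tt then B $$ (x, a) else w $ x)"
  show "C \<in> carrier_mat nj (tt + 1)" unfolding C_def by simp
  fix l assume l: "l < m"
  obtain u where u: "u \<in> carrier_vec tt" "vec nj (\<lambda>x. ext_el phi b ((M\<^sup>T *\<^sub>v z) $ x) $ l) = B *\<^sub>v u"
    using comb_in_B[OF M B X GBX z l] by blast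
  define v where "v = vec (tt + 1) (\<lambda>a. if a < tt then u $ a else ext_el phi b 1 $ l)"
  have "vec nj (\<lambda>x. ext_el phi b ((map_vec phi w + M\<^sup>T *\<^sub>v z) $ x) $ l) = C *\<^sub>v v"
  proof (rule eq_vecI)
    fix x assume "x < dim_vec (C *\<^sub>v v)"
    hence x: "x < nj" unfolding C_def by simp
    have ux: "(B *\<^sub>v u) $ x = ext_el phi b ((M\<^sup>T *\<^sub>v z) $ x) $ l"
      using arg_cong[OF u(2), of "\<lambda>v. v $ x"] x by simp
    have "ext_el phi b ((map_vec phi w + M\<^sup>T *\<^sub>v z) $ x) $ l
        = ext_el phi b (phi (w $ x)) $ l + ext_el phi b ((M\<^sup>T *\<^sub>v z) $ x) $ l"
      using x w M by (simp add: ext_add_nth[OF l])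
    also have "\<dots> = w $ x * ext_el phi b 1 $ l + (B *\<^sub>v u) $ x"
      using ext_phi_nth[OF l] ux by simp
    also have "\<dots> = (C *\<^sub>v v) $ x"
      using x B u by (simp add: C_def v_def scalar_prod_def lessThan_atLeast0[symmetric] add.commute)
    finally show "vec nj (\<lambda>x. ext_el phi b ((map_vec phi w + M\<^sup>T *\<^sub>v z) $ x) $ l) $ x = (C *\<^sub>v v) $ x"
      using x by simp
  qed (simp add: C_def)
  thus "\<exists>u\<in>carrier_vec (tt + 1). vec nj (\<lambda>x. ext_el phi b ((map_vec phi w + M\<^sup>T *\<^sub>v z) $ x) $ l) = C *\<^sub>v u"
    by (intro bexI[of _ v]) (auto simp: v_def)
qed

end


theorem theorem1:
  fixes phi :: "'q::{finite,field} \<Rightarrow> 'Q::{finite,field}"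
    and b :: "'Q vec"
    and ns :: "nat list"
    and n k s t :: nat
    and H E P :: "'Q mat"
  assumes emb: "is_embedding phi"
    and basis: "is_basis phi b"
    and m_pos: "dim_vec b \<ge> 1"
    and s_pos: "s \<ge> 1"
    and ns_pos: "\<forall>i < length ns. ns ! i > 0"
    and n_def: "n = sum_list ns"
    and k_le: "k \<le> n"
    and H_dim: "H \<in> carrier_mat (n - k) n"
    and H_rank: "rk H = n - k"
    and t_le: "enat t + 2 \<le> sr_min_dist phi b ns (mat_kernel H)"
    and E_dim: "E \<in> carrier_mat s n"
    and t_def: "t = sr_weight phi b ns E"
    and P_dim: "P \<in> carrier_mat (n - k) (n - k)"
    and P_inv: "invertible_mat P"
    and P_ref: "is_ref (P * (H * E\<^sup>T))"
    and s_ge: "s \<ge> t"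
    and E_rank: "rk E = t"
  shows "\<forall>i < length ns.
     row_space_q phi b (blk ns E i)
       = mat_kernel (ext_mat phi b (blk ns (rows_sub (P * H) (zero_rows (P * (H * E\<^sup>T)))) i))"
proof (intro allI impI)
  fix i assume i: "i < length ns"
  interpret ex: extctx phi b using emb basis by unfold_locales
  have m0: "0 < dim_vec b" using m_pos by simp
  define N where "N = n - k"
  define ell where "ell = length ns"
  define PH where "PH = P * H"
  define PS where "PS = P * (H * E\<^sup>T)"
  have Hc: "H \<in> carrier_mat N n" using H_dim unfolding N_def .
  have Pc: "P \<in> carrier_mat N N" using P_dim unfolding N_def .
  have Ec: "E \<in> carrier_mat s n" using E_dim .
  have ETc: "E\<^sup>T \<in> carrier_mat n s" using Ec by simp
  have PHc: "PH \<in> carrier_mat N n" unfolding PH_def using Pc Hc by simp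
  have PSc: "PS \<in> carrier_mat N s" unfolding PS_def using Pc Hc Ec by simp
  have PS_eq: "PS = PH * E\<^sup>T" unfolding PS_def PH_def using Pc Hc ETc by (simp add: assoc_mult_mat)
  from P_ref obtain r where r: "r \<le> N"
    and nzr: "\<forall>i < r. \<exists>j < s. PS $$ (i, j) \<noteq> 0"
    and zr: "\<forall>i. r \<le> i \<and> i < N \<longrightarrow> (\<forall>j < s. PS $$ (i, j) = 0)"
    and incr: "\<forall>i. Suc i < r \<longrightarrow> leading PS i < leading PS (Suc i)"
    unfolding is_ref_def PS_def[symmetric] using PSc by auto
  have Z: "zero_rows PS = {r..<N}"
  proof (intro equalityI subsetI)
    fix a assume "a \<in> zero_rows PS"
    hence a: "a < N" "\<forall>j<s. PS $$ (a, j) = 0" unfolding zero_rows_def using PSc by auto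
    have "\<not> a < r" using nzr a(2) by auto
    thus "a \<in> {r..<N}" using a by auto
  next
    fix a assume "a \<in> {r..<N}"
    thus "a \<in> zero_rows PS" unfolding zero_rows_def using zr PSc by auto
  qed
  define Hs where "Hs = rows_sub PH {r..<N}"
  have Hs_eq: "Hs = mat (N - r) n (\<lambda>(a, c). PH $$ (r + a, c))"
    unfolding Hs_def by (rule rows_sub_range[OF PHc r])
  have Hsc: "Hs \<in> carrier_mat (N - r) n" unfolding Hs_eq by simp
  have goal_eq: "rows_sub (P * H) (zero_rows (P * (H * E\<^sup>T))) = Hs"
    unfolding Hs_def PH_def using Z unfolding PS_def by simp
  have Hs_mult: "Hs *\<^sub>v v = vec (N - r) (\<lambda>a. (PH *\<^sub>v v) $ (r + a))" if v: "v \<in> carrier_vec n" for v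
    using v PHc r by (intro eq_vecI) (auto simp: Hs_eq scalar_prod_def)
  have HsE: "Hs *\<^sub>v (E\<^sup>T *\<^sub>v z) = 0\<^sub>v (N - r)" if z: "z \<in> carrier_vec s" for z
  proof -
    have "PH *\<^sub>v (E\<^sup>T *\<^sub>v z) = PS *\<^sub>v z" using PS_eq PHc ETc z by (simp add: assoc_mult_mat_vec)
    moreover have "(PS *\<^sub>v z) $ (r + a) = 0" if "a < N - r" for a
      using zr that PSc z by (simp add: scalar_prod_def)
    ultimately show ?thesis using Hs_mult[of "E\<^sup>T *\<^sub>v z"] ETc z by (intro eq_vecI) auto
  qed
  have K2: "\<exists>z \<in> carrier_vec s. H *\<^sub>v (x - E\<^sup>T *\<^sub>v z) = 0\<^sub>v N"
    if x: "x \<in> carrier_vec n" and hx: "Hs *\<^sub>v x = 0\<^sub>v (N - r)" for x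
  proof -
    define y where "y = PH *\<^sub>v x"
    have y: "y \<in> carrier_vec N" unfolding y_def using PHc x by simp
    have y0: "\<forall>a. r \<le> a \<and> a < N \<longrightarrow> y $ a = 0"
    proof (intro allI impI)
      fix a assume a: "r \<le> a \<and> a < N"
      have ar: "a - r < N - r" using a by arith
      have "(Hs *\<^sub>v x) $ (a - r) = 0" using hx ar by simp
      thus "y $ a = 0" using Hs_mult[OF x] a ar unfolding y_def by simp
    qed
    obtain z where z: "z \<in> carrier_vec s" "PS *\<^sub>v z = y"
      using ref_solve[OF PSc r nzr zr incr y y0] by blast
    have "P *\<^sub>v (H *\<^sub>v (x - E\<^sup>T *\<^sub>v z)) = PH *\<^sub>v (x - E\<^sup>T *\<^sub>v z)"
      unfolding PH_def using Pc Hc x ETc z by (simp add: assoc_mult_mat_vec)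
    also have "\<dots> = PH *\<^sub>v x - PH *\<^sub>v (E\<^sup>T *\<^sub>v z)"
      using PHc x ETc z by (simp add: mult_minus_distrib_mat_vec)
    also have "PH *\<^sub>v (E\<^sup>T *\<^sub>v z) = PS *\<^sub>v z" using PS_eq PHc ETc z by (simp add: assoc_mult_mat_vec)
    also have "PH *\<^sub>v x - PS *\<^sub>v z = 0\<^sub>v N" using z y unfolding y_def by simp
    finally have P0: "P *\<^sub>v (H *\<^sub>v (x - E\<^sup>T *\<^sub>v z)) = 0\<^sub>v N" .
    from P_inv obtain P' where P': "P * P' = 1\<^sub>m (dim_row P)" "P' * P = 1\<^sub>m (dim_row P')"
      unfolding invertible_mat_def inverts_mat_def by auto
    have P'c: "P' \<in> carrier_mat N N"
    proof -
      have "dim_col P' = N" using P'(1) Pc by (metis carrier_matD(1) index_mult_mat(3) index_one_mat(3))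
      moreover have "dim_row P' = N" using P'(2) Pc by (metis carrier_matD(2) index_mult_mat(3) index_one_mat(3))
      ultimately show ?thesis by auto
    qed
    have hv: "H *\<^sub>v (x - E\<^sup>T *\<^sub>v z) \<in> carrier_vec N" using Hc x ETc z by simp
    have "H *\<^sub>v (x - E\<^sup>T *\<^sub>v z) = (P' * P) *\<^sub>v (H *\<^sub>v (x - E\<^sup>T *\<^sub>v z))"
      using P'(2) P'c hv by simp
    also have "\<dots> = P' *\<^sub>v (P *\<^sub>v (H *\<^sub>v (x - E\<^sup>T *\<^sub>v z)))"
      by (rule assoc_mult_mat_vec[OF P'c Pc hv])
    also have "\<dots> = 0\<^sub>v N" using P0 P'c by simp
    finally show ?thesis using z by blast
  qed
  show "row_space_q phi b (blk ns E i)
       = mat_kernel (ext_mat phi b (blk ns (rows_sub (P * H) (zero_rows (P * (H * E\<^sup>T)))) i))"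
    unfolding goal_eq
  proof -
    define Ej where "Ej j = blk ns E j" for j
    define Gj where "Gj j = ext_mat phi b (Ej j)" for j
    define tj where "tj j = rk_q phi b (Ej j)" for j
    have Ejc: "Ej j \<in> carrier_mat s (ns ! j)" for j unfolding Ej_def blk_def using Ec by simp
    have Gjc: "Gj j \<in> carrier_mat (s * dim_vec b) (ns ! j)" for j
      unfolding Gj_def ext_mat_def using Ejc[of j] by simp
    have tj_rank: "tj j = vec_space.rank (s * dim_vec b) (Gj j)" for j
      unfolding tj_def rk_q_def Gj_def[symmetric] using Gjc[of j] by simp
    have tjT: "vec_space.rank (ns ! j) ((Gj j)\<^sup>T) = tj j" for j
      using rank_transpose[OF Gjc[of j]] tj_rank by simp
    have "\<forall>j. \<exists>B X. B \<in> carrier_mat (ns ! j) (tj j) \<and> X \<in> carrier_mat (tj j) (s * dim_vec b) \<and> (Gj j)\<^sup>T = B * X"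
    proof
      fix j
      have GT: "(Gj j)\<^sup>T \<in> carrier_mat (ns ! j) (s * dim_vec b)" using Gjc[of j] by simp
      show "\<exists>B X. B \<in> carrier_mat (ns ! j) (tj j) \<and> X \<in> carrier_mat (tj j) (s * dim_vec b) \<and> (Gj j)\<^sup>T = B * X"
        using rank_decomp[OF GT] unfolding tjT by blast
    qed
    then obtain Bf Xf where Bfc: "\<And>j. Bf j \<in> carrier_mat (ns ! j) (tj j)"
      and Xfc: "\<And>j. Xf j \<in> carrier_mat (tj j) (s * dim_vec b)" and GBX: "\<And>j. (Gj j)\<^sup>T = Bf j * Xf j"
      by metis
    have GBX': "(ext_mat phi b (Ej j))\<^sup>T = Bf j * Xf j" for j using GBX[of j] unfolding Gj_def .
    have t_sum: "t = (\<Sum>j<ell. tj j)" unfolding t_def sr_weight_def tj_def Ej_def ell_def ..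
    have Hsic: "blk ns Hs i \<in> carrier_mat (N - r) (ns ! i)" using Hsc by (simp add: blk_def)
    have HsN: "Hs \<in> carrier_mat (N - r) (sum_list ns)" using Hsc n_def by simp
    have kerI: "w \<in> mat_kernel (ext_mat phi b (blk ns Hs i))"
      if w: "w \<in> carrier_vec (ns ! i)" and hw: "Hs *\<^sub>v embv ns i (map_vec phi w) = 0\<^sub>v (N - r)" for w
    proof -
      have "blk ns Hs i *\<^sub>v map_vec phi w = 0\<^sub>v (N - r)"
        using mult_embv[OF HsN i, of "map_vec phi w"] hw w by simp
      hence "ext_mat phi b (blk ns Hs i) *\<^sub>v w = 0\<^sub>v ((N - r) * dim_vec b)"
        using ex.ext_mat_kernel_iff[OF Hsic w m0] by simp
      thus ?thesis unfolding mat_kernel_def using w Hsic by (simp add: ext_mat_def)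
    qed
    have RS: "row_space_q phi b (blk ns E i)
        = {w \<in> carrier_vec (ns ! i). \<exists>y \<in> carrier_vec (s * dim_vec b). (Gj i)\<^sup>T *\<^sub>v y = w}"
    proof -
      have "row_space_q phi b (blk ns E i) = vec_space.row_space (ns ! i) (Gj i)"
        unfolding row_space_q_def Gj_def Ej_def by (simp add: blk_def)
      also have "\<dots> = {w \<in> carrier_vec (dim_col (Gj i)). \<exists>y \<in> carrier_vec (dim_row (Gj i)). (Gj i)\<^sup>T *\<^sub>v y = w}"
        by (rule vec_space.row_space_eq[OF Gjc[of i]])
      finally show ?thesis using Gjc[of i] by simp
    qed
    show "row_space_q phi b (blk ns E i) = mat_kernel (ext_mat phi b (blk ns Hs i))"
    proof (intro equalityI subsetI)
      fix w assume "w \<in> row_space_q phi b (blk ns E i)"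
      then obtain y where w: "w \<in> carrier_vec (ns ! i)" and y: "y \<in> carrier_vec (s * dim_vec b)"
        and wy: "(Gj i)\<^sup>T *\<^sub>v y = w" unfolding RS by blast
      define Dj where "Dj j = embm ns j (map_mat phi (Bf j))" for j
      have Djc: "Dj j \<in> carrier_mat n (tj j)" for j
        unfolding Dj_def n_def using embm_carrier[of ns j "map_mat phi (Bf j)"] Bfc[of j] by simp
      define DL where "DL = concat (map (\<lambda>j. cols (Dj j)) [0..<ell])"
      define D where "D = mat_of_cols n DL"
      have DLc: "set DL \<subseteq> carrier_vec n"
      proof
        fix v assume "v \<in> set DL"
        then obtain j where "v \<in> set (cols (Dj j))" unfolding DL_def by auto
        thus "v \<in> carrier_vec n" using cols_dim[of "Dj j"] Djc[of j] by auto
      qed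
      have lenDL: "length DL = t"
      proof -
        have "length DL = sum_list (map (\<lambda>j. tj j) [0..<ell])"
        proof -
          have dc: "dim_col (Dj j) = tj j" for j using Djc[of j] by (rule carrier_matD(2))
          show ?thesis unfolding DL_def by (simp add: length_concat o_def dc)
        qed
        also have "\<dots> = (\<Sum>j<ell. tj j)" by (simp add: sum_list_distinct_conv_sum_set lessThan_atLeast0)
        finally show ?thesis using t_sum by simp
      qed
      have Dc: "D \<in> carrier_mat n t" unfolding D_def using lenDL by (metis mat_of_cols_carrier(1))
      have colsD: "cols D = DL" unfolding D_def using DLc by simp
      interpret VQ: vec_space "TYPE('Q)" n .
      have spanD: "VQ.span (set DL) = {y \<in> carrier_vec n. \<exists>x \<in> carrier_vec t. D *\<^sub>v x = y}"
        using VQ.col_space_eq[OF Dc] colsD Dc unfolding VQ.col_space_def by simp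
      have Dj_in: "Dj j *\<^sub>v v \<in> VQ.span (set DL)" if j: "j < ell" and v: "v \<in> carrier_vec (tj j)" for j v
      proof -
        have "Dj j *\<^sub>v v \<in> VQ.span (set (cols (Dj j)))"
          using VQ.col_space_eq[OF Djc[of j]] v Djc[of j] unfolding VQ.col_space_def by auto
        moreover have "set (cols (Dj j)) \<subseteq> set DL" using j unfolding DL_def by auto
        ultimately show ?thesis using VQ.span_is_monotone by blast
      qed
      have row_in: "row E r0 \<in> VQ.span (set DL)" if r0: "r0 < s" for r0
      proof (rule block_induct[where P = "\<lambda>v. v \<in> VQ.span (set DL)" and ns = ns])
        show "row E r0 \<in> carrier_vec (sum_list ns)" using Ec r0 n_def by simp
        have "D *\<^sub>v 0\<^sub>v t = 0\<^sub>v n" using Dc by simp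
        hence "0\<^sub>v n \<in> VQ.span (set DL)" unfolding spanD by force
        thus "0\<^sub>v (sum_list ns) \<in> VQ.span (set DL)" using n_def by simp
        show "u + v \<in> VQ.span (set DL)" if "u \<in> VQ.span (set DL)" "v \<in> VQ.span (set DL)" for u v
          using VQ.span_add1[OF DLc that] by simp
        fix j assume j: "j < length ns"
        define wj where "wj = vec (tj j) (\<lambda>a. \<Sum>l<dim_vec b. phi (Xf j $$ (a, r0 * dim_vec b + l)) * b $ l)"
        have "subv ns j (row E r0) = vec (ns ! j) (\<lambda>x. Ej j $$ (r0, x))"
          using Ec r0 off_le[OF j] n_def by (intro eq_vecI) (auto simp: subv_def Ej_def blk_def)
        also have "\<dots> = map_mat phi (Bf j) *\<^sub>v wj"
          unfolding wj_def by (rule ex.row_decomp[OF Ejc Bfc Xfc GBX' r0])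
        finally have "embv ns j (subv ns j (row E r0)) = Dj j *\<^sub>v wj"
          unfolding Dj_def using Bfc[of j] by (simp add: embm_mult wj_def)
        thus "embv ns j (subv ns j (row E r0)) \<in> VQ.span (set DL)"
          using Dj_in[of j wj] j unfolding ell_def wj_def by simp
      qed
      have "\<exists>Y \<in> carrier_mat t s. E\<^sup>T = D * Y"
      proof (rule assemble_cols[OF ETc Dc])
        fix r0 assume r0: "r0 < s"
        have "col E\<^sup>T r0 = row E r0" using r0 Ec by simp
        moreover obtain x where "x \<in> carrier_vec t" "D *\<^sub>v x = row E r0" using row_in[OF r0] spanD by auto
        ultimately show "\<exists>x\<in>carrier_vec t. col E\<^sup>T r0 = D *\<^sub>v x" by (intro bexI[of _ x]) auto
      qed
      then obtain Y where Y: "Y \<in> carrier_mat t s" "E\<^sup>T = D * Y" by blast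
      have rkET: "vec_space.rank n (E\<^sup>T) = t"
        using rank_transpose[OF Ec] E_rank Ec unfolding rk_def by simp
      obtain Zm where Zm: "Zm \<in> carrier_mat s t" "D = E\<^sup>T * Zm"
        using span_eq_rank[OF ETc Dc Y(1) Y(2) rkET] by blast
      have Xy: "Xf i *\<^sub>v y \<in> carrier_vec (tj i)" using Xfc[of i] y by simp
      have "w = Bf i *\<^sub>v (Xf i *\<^sub>v y)" using wy GBX[of i] Bfc[of i] Xfc[of i] y
        by (simp add: assoc_mult_mat_vec)
      hence "map_vec phi w = map_mat phi (Bf i) *\<^sub>v map_vec phi (Xf i *\<^sub>v y)"
        using ex.ph.mult_mat_vec_hom[OF Bfc[of i] Xy] by simp
      hence "embv ns i (map_vec phi w) = Dj i *\<^sub>v map_vec phi (Xf i *\<^sub>v y)"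
        unfolding Dj_def using Bfc[of i] Xy by (simp add: embm_mult)
      also have "\<dots> \<in> VQ.span (set DL)" using Dj_in[of i] i Xy unfolding ell_def by simp
      finally obtain x0 where x0: "x0 \<in> carrier_vec t" "embv ns i (map_vec phi w) = D *\<^sub>v x0"
        using spanD by auto
      have "embv ns i (map_vec phi w) = E\<^sup>T *\<^sub>v (Zm *\<^sub>v x0)"
        using x0 Zm ETc by (simp add: assoc_mult_mat_vec)
      hence "Hs *\<^sub>v embv ns i (map_vec phi w) = 0\<^sub>v (N - r)"
        using HsE[of "Zm *\<^sub>v x0"] Zm x0 by simp
      thus "w \<in> mat_kernel (ext_mat phi b (blk ns Hs i))" by (rule kerI[OF w])
    next
      fix w assume wK: "w \<in> mat_kernel (ext_mat phi b (blk ns Hs i))"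
      have w: "w \<in> carrier_vec (ns ! i)"
        and hw: "ext_mat phi b (blk ns Hs i) *\<^sub>v w = 0\<^sub>v ((N - r) * dim_vec b)"
        using wK Hsic unfolding mat_kernel_def by (auto simp: ext_mat_def)
      have hw': "blk ns Hs i *\<^sub>v map_vec phi w = 0\<^sub>v (N - r)"
        using ex.ext_mat_kernel_iff[OF Hsic w m0] hw by simp
      define x where "x = embv ns i (map_vec phi w)"
      have xc: "x \<in> carrier_vec n" unfolding x_def n_def by simp
      have "Hs *\<^sub>v x = 0\<^sub>v (N - r)"
        using mult_embv[OF HsN i, of "map_vec phi w"] w hw' by (simp add: x_def)
      then obtain z where z: "z \<in> carrier_vec s" "H *\<^sub>v (x - E\<^sup>T *\<^sub>v z) = 0\<^sub>v N"
        using K2[OF xc] by blast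
      have mz: "- z \<in> carrier_vec s" using z by simp
      define c where "c = x - E\<^sup>T *\<^sub>v z"
      have cc: "c \<in> carrier_vec n" using xc ETc z by (simp add: c_def)
      have EN: "E \<in> carrier_mat s (sum_list ns)" using Ec n_def by simp
      have subc: "subv ns j c = (if j = i then map_vec phi w else 0\<^sub>v (ns ! j)) + (Ej j)\<^sup>T *\<^sub>v (- z)"
        if j: "j < length ns" for j
      proof (rule eq_vecI)
        fix y assume "y < dim_vec ((if j = i then map_vec phi w else 0\<^sub>v (ns ! j)) + (Ej j)\<^sup>T *\<^sub>v (- z))"
        hence y: "y < ns ! j" using Ejc[of j] by simp
        have oy: "blk_off ns j + y < n" using off_le[OF j] y n_def by simp
        have "subv ns j c $ y = subv ns j x $ y - subv ns j (E\<^sup>T *\<^sub>v z) $ y"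
          using oy y xc ETc z by (simp add: subv_def c_def)
        also have "subv ns j x = (if j = i then map_vec phi w else 0\<^sub>v (ns ! j))"
          unfolding x_def by (rule subv_embv[OF i j]) (use w in simp)
        also have "subv ns j (E\<^sup>T *\<^sub>v z) = (Ej j)\<^sup>T *\<^sub>v z"
          unfolding Ej_def by (rule subv_mult[OF EN j z(1)])
        also have "((Ej j)\<^sup>T *\<^sub>v z) $ y = - (((Ej j)\<^sup>T *\<^sub>v (- z)) $ y)"
          using y Ejc[of j] z by simp
        finally show "subv ns j c $ y = ((if j = i then map_vec phi w else 0\<^sub>v (ns ! j)) + (Ej j)\<^sup>T *\<^sub>v (- z)) $ y"
          using y Ejc[of j] w by simp
      qed (use Ejc[of j] w in \<open>auto simp: subv_def\<close>)
      have c0: "c = 0\<^sub>v n"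
      proof (rule ccontr)
        assume cn: "c \<noteq> 0\<^sub>v n"
        have cK: "c \<in> mat_kernel H" using z cc Hc unfolding mat_kernel_def c_def by auto
        have zK: "0\<^sub>v n \<in> mat_kernel H" using Hc unfolding mat_kernel_def by auto
        have "sr_min_dist phi b ns (mat_kernel H) \<le> enat (sr_dist phi b ns c (0\<^sub>v n))"
        proof -
          have mem: "(c, 0\<^sub>v n) \<in> {(x, y). x \<in> mat_kernel H \<and> y \<in> mat_kernel H \<and> x \<noteq> y}"
            using cK zK cn by auto
          show ?thesis unfolding sr_min_dist_def
            using INF_lower[OF mem, of "\<lambda>xy. enat (sr_dist phi b ns (fst xy) (snd xy))"] by simp
        qed
        also have "sr_dist phi b ns c (0\<^sub>v n) = sr_weight phi b ns (mat_of_row c)"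
          unfolding sr_dist_def using cc by simp
        finally have le1: "enat t + 2 \<le> enat (sr_weight phi b ns (mat_of_row c))" using t_le by simp
        have ccn: "c \<in> carrier_vec (sum_list ns)" using cc n_def by simp
        have bnd: "rk_q phi b (blk ns (mat_of_row c) j) \<le> tj j + (if j = i then 1 else 0)"
          if j: "j < ell" for j
        proof -
          have j': "j < length ns" using j unfolding ell_def .
          have "rk_q phi b (blk ns (mat_of_row c) j) = vec_space.rank (dim_vec b) (ex.Extv (subv ns j c))"
            unfolding rk_q_def ex.ext_blk_row[OF ccn j'] by (simp add: ex.Extv_def)
          also have "\<dots> \<le> tj j + (if j = i then 1 else 0)"
          proof (cases "j = i")
            case True
            have "subv ns j c = map_vec phi w + (Ej i)\<^sup>T *\<^sub>v (- z)" using subc[OF j'] True by simp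
            thus ?thesis using ex.rank_bound_comb1[OF Ejc Bfc Xfc GBX' mz w] True by simp
          next
            case False
            have "subv ns j c = (Ej j)\<^sup>T *\<^sub>v (- z)" using subc[OF j'] False Ejc[of j] mz by simp
            thus ?thesis using ex.rank_bound_comb[OF Ejc Bfc Xfc GBX' mz] False by simp
          qed
          finally show ?thesis .
        qed
        have "sr_weight phi b ns (mat_of_row c) = (\<Sum>j<ell. rk_q phi b (blk ns (mat_of_row c) j))"
          unfolding sr_weight_def ell_def ..
        also have "\<dots> \<le> (\<Sum>j<ell. tj j + (if j = i then 1 else 0))"
          by (rule sum_mono) (use bnd in simp)
        also have "\<dots> = t + 1" using i unfolding t_sum sum.distrib ell_def by simp
        finally have "sr_weight phi b ns (mat_of_row c) \<le> t + 1" .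
        moreover have "t + 2 \<le> sr_weight phi b ns (mat_of_row c)" using le1 by (simp add: numeral_eq_enat)
        ultimately show False by simp
      qed
      have xE: "x = E\<^sup>T *\<^sub>v z"
      proof (rule eq_vecI)
        fix a assume "a < dim_vec (E\<^sup>T *\<^sub>v z)"
        hence a: "a < n" using ETc by simp
        have "c $ a = 0" using c0 a by simp
        thus "x $ a = (E\<^sup>T *\<^sub>v z) $ a" using a xc ETc z by (simp add: c_def)
      qed (use xc ETc in simp)
      have wE: "map_vec phi w = (Ej i)\<^sup>T *\<^sub>v z"
      proof -
        have "map_vec phi w = subv ns i x" unfolding x_def using subv_embv[OF i i, of "map_vec phi w"] w by simp
        also have "\<dots> = (Ej i)\<^sup>T *\<^sub>v z" unfolding xE Ej_def by (rule subv_mult[OF EN i z(1)])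
        finally show ?thesis .
      qed
      obtain l0 where l0: "l0 < dim_vec b" "ext_el phi b 1 $ l0 \<noteq> 0" using ex.ext_one_nz by blast
      define \<kappa> where "\<kappa> = ext_el phi b 1 $ l0"
      define U where "U = vec (s * dim_vec b) (\<lambda>p. ext_el phi b (z $ (p div dim_vec b) * b $ (p mod dim_vec b)) $ l0)"
      have Uc: "U \<in> carrier_vec (s * dim_vec b)" unfolding U_def by simp
      have "vec (ns ! i) (\<lambda>y. ext_el phi b (((Ej i)\<^sup>T *\<^sub>v z) $ y) $ l0) = (Gj i)\<^sup>T *\<^sub>v U"
        unfolding U_def Gj_def by (rule ex.ext_comb_cols[OF Ejc z(1) l0(1)])
      moreover have "vec (ns ! i) (\<lambda>y. ext_el phi b (((Ej i)\<^sup>T *\<^sub>v z) $ y) $ l0) = \<kappa> \<cdot>\<^sub>v w"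
      proof (rule eq_vecI)
        fix y assume "y < dim_vec (\<kappa> \<cdot>\<^sub>v w)"
        hence y: "y < ns ! i" using w by simp
        have "((Ej i)\<^sup>T *\<^sub>v z) $ y = phi (w $ y)" using arg_cong[OF wE, of "\<lambda>v. v $ y"] y w by simp
        thus "vec (ns ! i) (\<lambda>y. ext_el phi b (((Ej i)\<^sup>T *\<^sub>v z) $ y) $ l0) $ y = (\<kappa> \<cdot>\<^sub>v w) $ y"
          using y w ex.ext_phi_nth[OF l0(1)] by (simp add: \<kappa>_def mult.commute)
      qed (use w in simp)
      ultimately have kw: "\<kappa> \<cdot>\<^sub>v w = (Gj i)\<^sup>T *\<^sub>v U" by simp
      have GTc: "(Gj i)\<^sup>T \<in> carrier_mat (ns ! i) (s * dim_vec b)" using Gjc[of i] by simp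
      have "(Gj i)\<^sup>T *\<^sub>v ((1 / \<kappa>) \<cdot>\<^sub>v U) = (1 / \<kappa>) \<cdot>\<^sub>v ((Gj i)\<^sup>T *\<^sub>v U)"
        by (rule mult_mat_vec[OF GTc Uc])
      also have "\<dots> = (1 / \<kappa>) \<cdot>\<^sub>v (\<kappa> \<cdot>\<^sub>v w)" using kw by simp
      also have "\<dots> = w" using l0(2) unfolding \<kappa>_def by (simp add: smult_smult_assoc)
      finally have "(Gj i)\<^sup>T *\<^sub>v ((1 / \<kappa>) \<cdot>\<^sub>v U) = w" .
      moreover have "(1 / \<kappa>) \<cdot>\<^sub>v U \<in> carrier_vec (s * dim_vec b)" using Uc by simp
      ultimately show "w \<in> row_space_q phi b (blk ns E i)" unfolding RS using w by blast
    qed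
  qed
qed


end
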